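(* The bidirected quarter-grid, the ascending cyclically directed quarter-grid, the descending cyclically directed quarter-grid, and every complete ray digraph each have precisely one end.
   Context: A ray is an orientation of a one-way infinite path with every edge oriented towards infinity; an anti-ray is one with every edge oriented away from infinity; a dipath is a directed path. For rays or anti-rays $Q,R$ write $Q\le R$ if there are infinitely many pairwise disjoint $Q$--$R$ dipaths, and $Q\sim R$ if $Q\le R$ and $R\le Q$; the ends of a digraph are the equivalence classes of $\sim$ on its rays and anti-rays. In all following definitions start with infinitely many pairwise disjoint rays $R_i=x^i_1x^i_2\ldots$ ($i\ge1$). Bidirected quarter-grid: add the edges $x^i_{4j+7}x^{i+1}_{4j+1}$ and $x^{i+1}_{4j+2}x^i_{4j+8}$ for all $j\ge 0$, $i\ge 1$, then suppress every vertex $v\in V(R_i)$ with $d^-(v)=d^+(v)=1$ all of whose neighbours lie on $R_i$. Ascending cyclically directed quarter-grid: add the edges $x^1_jx^2_j$ for all odd $j$, $x^i_{j+3}x^{i+1}_j$ for all $i\ge2$ and all odd $j$, and $x^i_2x^1_{2(i-1)}$ for all $i\ge 2$. Descending cyclically directed quarter-grid: add the edges $x^{i+1}_jx^i_{j+1}$ for all even $j$ and all $i\ge1$, and $x^1_{2i}x^{i+1}_1$ for all $i\ge 1$. Complete ray digraph: the union of the rays $R_i$ together with, for every two distinct $i,i'$, infinitely many disjoint $R_i$--$R_{i'}$ dipaths and infinitely many disjoint $R_{i'}$--$R_i$ dipaths, such that none of these dipaths meets any ray $R_j$ other than its two end rays, all these additional dipaths are pairwise disjoint, and the starting vertex of each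 $R_i$ is the end vertex of an $R_1$--$R_i$ dipath. *)

theory Defs
  imports Main
begin

text \<open>A digraph is given by a vertex set V and an arc set E (pairs (tail, head)).\<close>

definition walk_arcs :: "('a \<times> 'a) set \<Rightarrow> 'a list \<Rightarrow> bool" where
  "walk_arcs E p \<longleftrightarrow> (\<forall>k. Suc k < length p \<longrightarrow> (p ! k, p ! Suc k) \<in> E)"

definition dipath :: "'a set \<Rightarrow> ('a \<times> 'a) set \<Rightarrow> 'a list \<Rightarrow> bool" where
  "dipath V E p \<longleftrightarrow> p \<noteq> [] \<and> distinct p \<and> set p \<subseteq> V \<and> walk_arcs E p"

definition AB_dipath :: "'a set \<Rightarrow> ('a \<times> 'a) set \<Rightarrow> 'a set \<Rightarrow> 'a set \<Rightarrow> 'a list \<Rightarrow> bool" where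
  "AB_dipath V E A B p \<longleftrightarrow> dipath V E p \<and> set p \<inter> A = {hd p} \<and> set p \<inter> B = {last p}"

definition ray :: "'a set \<Rightarrow> ('a \<times> 'a) set \<Rightarrow> (nat \<Rightarrow> 'a) \<Rightarrow> bool" where
  "ray V E f \<longleftrightarrow> inj f \<and> range f \<subseteq> V \<and> (\<forall>n. (f n, f (Suc n)) \<in> E)"

definition antiray :: "'a set \<Rightarrow> ('a \<times> 'a) set \<Rightarrow> (nat \<Rightarrow> 'a) \<Rightarrow> bool" where
  "antiray V E f \<longleftrightarrow> inj f \<and> range f \<subseteq> V \<and> (\<forall>n. (f (Suc n), f n) \<in> E)"

definition rays_antirays :: "'a set \<Rightarrow> ('a \<times> 'a) set \<Rightarrow> (bool \<times> (nat \<Rightarrow> 'a)) set" where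
  "rays_antirays V E = {(True, f) | f. ray V E f} \<union> {(False, f) | f. antiray V E f}"

definition ray_le :: "'a set \<Rightarrow> ('a \<times> 'a) set \<Rightarrow> bool \<times> (nat \<Rightarrow> 'a) \<Rightarrow> bool \<times> (nat \<Rightarrow> 'a) \<Rightarrow> bool" where
  "ray_le V E Q R \<longleftrightarrow> (\<exists>P. infinite P \<and>
      (\<forall>p\<in>P. AB_dipath V E (range (snd Q)) (range (snd R)) p) \<and>
      pairwise (\<lambda>p q. set p \<inter> set q = {}) P)"

definition ray_equiv :: "'a set \<Rightarrow> ('a \<times> 'a) set \<Rightarrow> ((bool \<times> (nat \<Rightarrow> 'a)) \<times> (bool \<times> (nat \<Rightarrow> 'a))) set" where
  "ray_equiv V E = {(Q, R). Q \<in> rays_antirays V E \<and> R \<in> rays_antirays V E \<and>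
      ray_le V E Q R \<and> ray_le V E R Q}"

definition ends :: "'a set \<Rightarrow> ('a \<times> 'a) set \<Rightarrow> (bool \<times> (nat \<Rightarrow> 'a)) set set" where
  "ends V E = rays_antirays V E // ray_equiv V E"

definition indeg :: "('a \<times> 'a) set \<Rightarrow> 'a \<Rightarrow> nat" where
  "indeg E v = card {u. (u, v) \<in> E}"

definition outdeg :: "('a \<times> 'a) set \<Rightarrow> 'a \<Rightarrow> nat" where
  "outdeg E v = card {w. (v, w) \<in> E}"

definition suppress_V :: "'a set \<Rightarrow> 'a set \<Rightarrow> 'a set" where
  "suppress_V V S = V - S"

definition suppress_E :: "'a set \<Rightarrow> ('a \<times> 'a) set \<Rightarrow> 'a set \<Rightarrow> ('a \<times> 'a) set" where
  "suppress_E V E S = {(u, w). u \<in> V - S \<and> w \<in> V - S \<and>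
      (\<exists>xs. set xs \<subseteq> S \<and> walk_arcs E (u # xs @ [w]))}"

text \<open>Vertex x^i_j is the pair (i, j), with i, j \<ge> 1; the ray R_i is x^i_1 x^i_2 ...\<close>

definition qg_V :: "(nat \<times> nat) set" where
  "qg_V = {(i, j). 1 \<le> i \<and> 1 \<le> j}"

definition qg_rayE :: "((nat \<times> nat) \<times> (nat \<times> nat)) set" where
  "qg_rayE = {((i, j), (i, j + 1)) | i j. 1 \<le> i \<and> 1 \<le> j}"

definition bqg0_E :: "((nat \<times> nat) \<times> (nat \<times> nat)) set" where
  "bqg0_E = qg_rayE
     \<union> {((i, 4*j + 7), (i + 1, 4*j + 1)) | i j. 1 \<le> i}
     \<union> {((i + 1, 4*j + 2), (i, 4*j + 8)) | i j. 1 \<le> i}"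

definition bqg_S :: "(nat \<times> nat) set" where
  "bqg_S = {(i, j). (i, j) \<in> qg_V \<and> indeg bqg0_E (i, j) = 1 \<and> outdeg bqg0_E (i, j) = 1 \<and>
      (\<forall>u. (u, (i, j)) \<in> bqg0_E \<or> ((i, j), u) \<in> bqg0_E \<longrightarrow> fst u = i)}"

definition bqg_V :: "(nat \<times> nat) set" where
  "bqg_V = suppress_V qg_V bqg_S"

definition bqg_E :: "((nat \<times> nat) \<times> (nat \<times> nat)) set" where
  "bqg_E = suppress_E qg_V bqg0_E bqg_S"

definition acq_E :: "((nat \<times> nat) \<times> (nat \<times> nat)) set" where
  "acq_E = qg_rayE
     \<union> {((1, j), (2, j)) | j. odd j}
     \<union> {((i, j + 3), (i + 1, j)) | i j. 2 \<le> i \<and> odd j}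
     \<union> {((i, 2), (1, 2 * (i - 1))) | i. 2 \<le> i}"

definition dcq_E :: "((nat \<times> nat) \<times> (nat \<times> nat)) set" where
  "dcq_E = qg_rayE
     \<union> {((i + 1, j), (i, j + 1)) | i j. 1 \<le> i \<and> 1 \<le> j \<and> even j}
     \<union> {((1, 2 * i), (i + 1, 1)) | i. 1 \<le> i}"

text \<open>R i n is the vertex x^i_{n+1} of the ray R_i (i \<ge> 1). P is the family of additional dipaths.\<close>
definition complete_ray_digraph :: "'a set \<Rightarrow> ('a \<times> 'a) set \<Rightarrow> bool" where
  "complete_ray_digraph V E \<longleftrightarrow>
    (\<exists>(R :: nat \<Rightarrow> nat \<Rightarrow> 'a) (P :: 'a list set).
       (\<forall>i\<ge>1. inj (R i)) \<and>
       (\<forall>i\<ge>1. \<forall>i'\<ge>1. i \<noteq> i' \<longrightarrow> range (R i) \<inter> range (R i') = {}) \<and>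
       V = (\<Union>i\<in>{1..}. range (R i)) \<union> (\<Union>p\<in>P. set p) \<and>
       E = {(R i n, R i (Suc n)) | i n. 1 \<le> i}
           \<union> {(p ! k, p ! Suc k) | p k. p \<in> P \<and> Suc k < length p} \<and>
       (\<forall>p\<in>P. \<exists>i\<ge>1. \<exists>i'\<ge>1. i \<noteq> i' \<and> AB_dipath V E (range (R i)) (range (R i')) p \<and>
            (\<forall>j\<ge>1. j \<noteq> i \<and> j \<noteq> i' \<longrightarrow> set p \<inter> range (R j) = {})) \<and>
       pairwise (\<lambda>p q. set p \<inter> set q = {}) P \<and>
       (\<forall>i\<ge>1. \<forall>i'\<ge>1. i \<noteq> i' \<longrightarrow>
            infinite {p \<in> P. AB_dipath V E (range (R i)) (range (R i')) p}) \<and>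
       (\<forall>i\<ge>2. \<exists>p\<in>P. AB_dipath V E (range (R 1)) (range (R i)) p \<and> last p = R i 0))"

end

theory Submission
  imports Defs
begin


definition relW :: "('a \<times> 'a) set \<Rightarrow> 'a set \<Rightarrow> ('a \<times> 'a) set" where
  "relW E W = {(a,b). (a,b) \<in> E \<and> a \<in> W \<and> b \<in> W}"

lemma walk_arcs_Nil[simp]: "walk_arcs E []"
  by (simp add: walk_arcs_def)

lemma walk_arcs_single[simp]: "walk_arcs E [a]"
  by (simp add: walk_arcs_def)

lemma walk_arcs_Cons2[simp]:
  "walk_arcs E (a # b # p) \<longleftrightarrow> (a,b) \<in> E \<and> walk_arcs E (b # p)"
proof
  assume H: "walk_arcs E (a # b # p)"
  have "(a,b) \<in> E" using H[unfolded walk_arcs_def, rule_format, of 0] by simp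
  moreover have "walk_arcs E (b # p)"
    unfolding walk_arcs_def
  proof (intro allI impI)
    fix k assume "Suc k < length (b # p)"
    then show "((b # p) ! k, (b # p) ! Suc k) \<in> E"
      using H[unfolded walk_arcs_def, rule_format, of "Suc k"] by simp
  qed
  ultimately show "(a,b) \<in> E \<and> walk_arcs E (b # p)" by blast
next
  assume H: "(a,b) \<in> E \<and> walk_arcs E (b # p)"
  show "walk_arcs E (a # b # p)"
    unfolding walk_arcs_def
  proof (intro allI impI)
    fix k assume k: "Suc k < length (a # b # p)"
    show "((a # b # p) ! k, (a # b # p) ! Suc k) \<in> E"
    proof (cases k)
      case 0 then show ?thesis using H by simp
    next
      case (Suc k') then show ?thesis
        using H k unfolding walk_arcs_def by auto
    qed
  qed
qed

lemma walk_arcs_append: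
  "walk_arcs E (p @ q) \<longleftrightarrow> walk_arcs E p \<and> walk_arcs E q \<and> (p \<noteq> [] \<longrightarrow> q \<noteq> [] \<longrightarrow> (last p, hd q) \<in> E)"
proof (induction p)
  case Nil then show ?case by simp
next
  case (Cons a p)
  show ?case
  proof (cases p)
    case Nil
    then show ?thesis by (cases q) auto
  next
    case (Cons b p')
    then show ?thesis using Cons.IH by auto
  qed
qed

lemma rtrancl_walk:
  assumes "(u,v) \<in> (relW E W)\<^sup>*" "u \<in> W"
  shows "\<exists>p. p \<noteq> [] \<and> hd p = u \<and> last p = v \<and> set p \<subseteq> W \<and> walk_arcs E p"
  using assms(1)
proof (induction rule: rtrancl_induct)
  case base then show ?case using assms(2) by (intro exI[of _ "[u]"]) auto
next
  case (step b c)
  then obtain p where p: "p \<noteq> []" "hd p = u" "last p = b" "set p \<subseteq> W" "walk_arcs E p" by blast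
  show ?case
    using p step(2) by (intro exI[of _ "p @ [c]"]) (auto simp: walk_arcs_append relW_def)
qed

lemma walk_rtrancl:
  assumes "p \<noteq> []" "set p \<subseteq> W" "walk_arcs E p"
  shows "(hd p, last p) \<in> (relW E W)\<^sup>*"
  using assms
proof (induction p)
  case Nil then show ?case by simp
next
  case (Cons a p)
  show ?case
  proof (cases p)
    case Nil then show ?thesis by simp
  next
    case (Cons b p')
    then have "(b, last p) \<in> (relW E W)\<^sup>*" using Cons.IH Cons.prems by auto
    moreover have "(a, b) \<in> relW E W" using Cons.prems \<open>p = b # p'\<close> by (auto simp: relW_def)
    ultimately show ?thesis using \<open>p = b # p'\<close> by (auto intro: converse_rtrancl_into_rtrancl)
  qed
qed

definition good_walk where
  "good_walk E W A B p \<longleftrightarrow> p \<noteq> [] \<and> hd p \<in> A \<and> last p \<in> B \<and> set p \<subseteq> W \<and> walk_arcs E p"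

lemma shortest_AB:
  assumes "good_walk E W A B p0" "W \<subseteq> V"
  shows "\<exists>p. AB_dipath V E A B p \<and> set p \<subseteq> W"
proof -
  obtain p where gp: "good_walk E W A B p" and minp: "\<And>q. good_walk E W A B q \<Longrightarrow> length p \<le> length q"
    using ex_has_least_nat[of "good_walk E W A B" p0 length] assms(1) by blast
  have ne: "p \<noteq> []" and hA: "hd p \<in> A" and lB: "last p \<in> B" and sW: "set p \<subseteq> W" and wk: "walk_arcs E p"
    using gp by (auto simp: good_walk_def)
  have dist: "distinct p"
  proof (rule ccontr)
    assume "\<not> distinct p"
    then obtain xs ys zs y where pe: "p = xs @ [y] @ ys @ [y] @ zs"
      using not_distinct_decomp by blast
    let ?q = "xs @ [y] @ zs"
    have w1: "walk_arcs E (xs @ [y])" using wk pe walk_arcs_append[of E "xs @ [y]" "ys @ [y] @ zs"] by simp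
    have w2: "walk_arcs E ([y] @ zs)" using wk pe walk_arcs_append[of E "xs @ [y] @ ys" "[y] @ zs"] by simp
    have "walk_arcs E ?q"
    proof -
      have "walk_arcs E ((xs @ [y]) @ zs)"
        using w1 w2 by (cases zs) (auto simp: walk_arcs_append)
      then show ?thesis by simp
    qed
    moreover have "hd ?q = hd p" using pe by (cases xs) auto
    moreover have "last ?q = last p" using pe by (cases zs) auto
    moreover have "set ?q \<subseteq> set p" using pe by auto
    ultimately have "good_walk E W A B ?q" using gp by (auto simp: good_walk_def)
    then have "length p \<le> length ?q" by (rule minp)
    then show False using pe by simp
  qed
  have intA: "set p \<inter> A = {hd p}"
  proof (rule ccontr)
    assume "set p \<inter> A \<noteq> {hd p}"
    then obtain a where a: "a \<in> set p" "a \<in> A" "a \<noteq> hd p" using hA ne by auto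
    then obtain xs ys where pe: "p = xs @ a # ys" by (meson split_list)
    have xs: "xs \<noteq> []" using pe a by auto
    let ?q = "a # ys"
    have "walk_arcs E ?q" using wk pe walk_arcs_append[of E xs "a # ys"] by simp
    moreover have "last ?q = last p" using pe by simp
    moreover have "set ?q \<subseteq> set p" using pe by auto
    ultimately have "good_walk E W A B ?q" using gp a by (auto simp: good_walk_def)
    then have "length p \<le> length ?q" by (rule minp)
    then show False using pe xs by simp
  qed
  have intB: "set p \<inter> B = {last p}"
  proof (rule ccontr)
    assume "set p \<inter> B \<noteq> {last p}"
    then obtain b where b: "b \<in> set p" "b \<in> B" "b \<noteq> last p" using lB ne by auto
    then obtain xs ys where pe: "p = xs @ b # ys" by (meson split_list)
    have ys: "ys \<noteq> []" using pe b by auto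
    let ?q = "xs @ [b]"
    have "walk_arcs E ?q" using wk pe walk_arcs_append[of E "xs @ [b]" ys] by simp
    moreover have "hd ?q = hd p" using pe by (cases xs) auto
    moreover have "set ?q \<subseteq> set p" using pe by auto
    ultimately have "good_walk E W A B ?q" using gp b by (auto simp: good_walk_def)
    then have "length p \<le> length ?q" by (rule minp)
    then show False using pe ys by simp
  qed
  show ?thesis
    using ne dist sW assms(2) wk intA intB
    by (intro exI[of _ p]) (auto simp: AB_dipath_def dipath_def)
qed

primrec greedy :: "('a list \<Rightarrow> bool) \<Rightarrow> nat \<Rightarrow> 'a list set" where
  "greedy Pr 0 = {}"
| "greedy Pr (Suc n) = insert (SOME p. Pr p \<and> set p \<inter> \<Union>(set ` greedy Pr n) = {}) (greedy Pr n)"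

lemma greedy_props:
  assumes "\<And>X. finite X \<Longrightarrow> \<exists>p. Pr p \<and> set p \<inter> X = {}"
    and ne: "\<And>p. Pr p \<Longrightarrow> p \<noteq> []"
  shows "finite (greedy Pr n) \<and> card (greedy Pr n) = n \<and> (\<forall>p\<in>greedy Pr n. Pr p)
     \<and> pairwise (\<lambda>p q. set p \<inter> set q = {}) (greedy Pr n)"
proof (induction n)
  case 0 then show ?case by simp
next
  case (Suc n)
  let ?X = "\<Union>(set ` greedy Pr n)"
  have "finite ?X" using Suc.IH by auto
  then obtain p0 where "Pr p0 \<and> set p0 \<inter> ?X = {}" using assms(1) by blast
  then have sp: "Pr (SOME p. Pr p \<and> set p \<inter> ?X = {}) \<and> set (SOME p. Pr p \<and> set p \<inter> ?X = {}) \<inter> ?X = {}"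
    by (rule someI)
  define q where "q = (SOME p. Pr p \<and> set p \<inter> ?X = {})"
  have q: "Pr q" "set q \<inter> ?X = {}" using sp q_def by auto
  have qn: "q \<notin> greedy Pr n"
  proof
    assume "q \<in> greedy Pr n"
    then have "set q \<subseteq> ?X" by auto
    moreover obtain x where "x \<in> set q" using ne[OF q(1)] by (cases q) auto
    ultimately show False using q by blast
  qed
  have pw: "pairwise (\<lambda>p q. set p \<inter> set q = {}) (insert q (greedy Pr n))"
    using Suc.IH q(2) by (auto simp: pairwise_insert)
  have eq: "greedy Pr (Suc n) = insert q (greedy Pr n)" unfolding q_def by simp
  have fin: "finite (greedy Pr n)" using Suc.IH by blast
  have c: "card (insert q (greedy Pr n)) = Suc n"
    using card_insert_disjoint[OF fin qn] Suc.IH by simp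
  show ?case unfolding eq using fin c pw q(1) Suc.IH by blast
qed

lemma greedy_infinite:
  assumes "\<And>X. finite X \<Longrightarrow> \<exists>p. Pr p \<and> set p \<inter> X = {}"
    and ne: "\<And>p. Pr p \<Longrightarrow> p \<noteq> []"
  shows "\<exists>P. infinite P \<and> (\<forall>p\<in>P. Pr p) \<and> pairwise (\<lambda>p q. set p \<inter> set q = {}) P"
proof -
  let ?P = "\<Union>n. greedy Pr n"
  have mono: "greedy Pr m \<subseteq> greedy Pr n" if "m \<le> n" for m n
  proof (rule lift_Suc_mono_le[OF _ that])
    fix k show "greedy Pr k \<subseteq> greedy Pr (Suc k)" unfolding greedy.simps(2) by (rule subset_insertI)
  qed
  have "infinite ?P"
  proof
    assume f: "finite ?P"
    have "card (greedy Pr (Suc (card ?P))) \<le> card ?P"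
      by (rule card_mono[OF f], rule UN_upper, rule UNIV_I)
    moreover have "card (greedy Pr (Suc (card ?P))) = Suc (card ?P)"
      using greedy_props[OF assms, of "Suc (card ?P)"] by blast
    ultimately show False by linarith
  qed
  moreover have "\<forall>p\<in>?P. Pr p" using greedy_props[OF assms] by blast
  moreover have "pairwise (\<lambda>p q. set p \<inter> set q = {}) ?P"
    unfolding pairwise_def
  proof (intro ballI impI)
    fix p q assume "p \<in> ?P" "q \<in> ?P" "p \<noteq> q"
    then obtain m n where "p \<in> greedy Pr m" "q \<in> greedy Pr n" by blast
    then have "p \<in> greedy Pr (max m n)" "q \<in> greedy Pr (max m n)" using mono by (meson max.cobounded1 max.cobounded2 subsetD)+
    then show "set p \<inter> set q = {}"
      using greedy_props[OF assms, of "max m n"] \<open>p \<noteq> q\<close> unfolding pairwise_def by blast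
  qed
  ultimately show ?thesis by blast
qed

lemma RA_props:
  assumes "Q \<in> rays_antirays V E"
  shows "inj (snd Q)" "range (snd Q) \<subseteq> V"
    "\<And>n. (snd Q n, snd Q (Suc n)) \<in> E \<or> (snd Q (Suc n), snd Q n) \<in> E"
  using assms by (auto simp: rays_antirays_def ray_def antiray_def)

lemma RA_infinite:
  assumes "Q \<in> rays_antirays V E"
  shows "infinite (range (snd Q))"
  using RA_props(1)[OF assms] finite_imageD[of "snd Q" UNIV] by auto

lemma one_end:
  assumes Q0: "Q0 \<in> rays_antirays V E"
    and H: "\<And>Q R X. Q \<in> rays_antirays V E \<Longrightarrow> R \<in> rays_antirays V E \<Longrightarrow> finite X \<Longrightarrow>
       \<exists>u\<in>range (snd Q). \<exists>v\<in>range (snd R). u \<notin> X \<and> (u,v) \<in> (relW E (V - X))\<^sup>*"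
  shows "card (ends V E) = 1"
proof -
  let ?RA = "rays_antirays V E"
  have le: "ray_le V E Q R" if Q: "Q \<in> ?RA" and R: "R \<in> ?RA" for Q R
  proof -
    let ?Pr = "AB_dipath V E (range (snd Q)) (range (snd R))"
    have "\<exists>p. ?Pr p \<and> set p \<inter> X = {}" if X: "finite X" for X
    proof -
      obtain u v where u: "u \<in> range (snd Q)" and v: "v \<in> range (snd R)" and uX: "u \<notin> X"
        and uv: "(u,v) \<in> (relW E (V - X))\<^sup>*"
        using H[OF Q R X] by blast
      have uW: "u \<in> V - X" using u uX RA_props(2)[OF Q] by auto
      obtain p where "p \<noteq> [] \<and> hd p = u \<and> last p = v \<and> set p \<subseteq> V - X \<and> walk_arcs E p"
        using rtrancl_walk[OF uv uW] by blast
      then have "good_walk E (V - X) (range (snd Q)) (range (snd R)) p"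
        using u v by (auto simp: good_walk_def)
      then obtain q where "?Pr q" "set q \<subseteq> V - X"
        using shortest_AB[of E "V - X"] by blast
      then show ?thesis by blast
    qed
    moreover have "\<And>p. ?Pr p \<Longrightarrow> p \<noteq> []" by (simp add: AB_dipath_def dipath_def)
    ultimately obtain P where "infinite P \<and> (\<forall>p\<in>P. ?Pr p) \<and> pairwise (\<lambda>p q. set p \<inter> set q = {}) P"
      using greedy_infinite[of ?Pr] by blast
    then show ?thesis unfolding ray_le_def by blast
  qed
  have eq: "ray_equiv V E = ?RA \<times> ?RA"
    using le by (auto simp: ray_equiv_def)
  have "ends V E = {?RA}"
    unfolding ends_def eq quotient_def using Q0 by auto
  then show ?thesis by simp
qed



lemma fin_family:
  assumes "\<forall>a\<in>I. \<forall>b\<in>I. a \<noteq> b \<longrightarrow> F a \<inter> F b = {}" "finite Y"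
  shows "finite {a\<in>I. F a \<inter> Y \<noteq> {}}"
proof -
  let ?g = "\<lambda>a. SOME y. y \<in> F a \<inter> Y"
  have g: "?g a \<in> F a \<inter> Y" if "a \<in> {a\<in>I. F a \<inter> Y \<noteq> {}}" for a
  proof -
    from that obtain y where "y \<in> F a \<inter> Y" by auto
    then show ?thesis by (rule someI)
  qed
  have "inj_on ?g {a\<in>I. F a \<inter> Y \<noteq> {}}"
  proof (rule inj_onI)
    fix a b assume a: "a \<in> {a\<in>I. F a \<inter> Y \<noteq> {}}" and b: "b \<in> {a\<in>I. F a \<inter> Y \<noteq> {}}" and e: "?g a = ?g b"
    show "a = b"
    proof (rule ccontr)
      assume "a \<noteq> b"
      then have "F a \<inter> F b = {}" using a b assms(1) by blast
      then show False using g[OF a] g[OF b] e by auto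
    qed
  qed
  moreover have "?g ` {a\<in>I. F a \<inter> Y \<noteq> {}} \<subseteq> Y" using g by blast
  ultimately show ?thesis using inj_on_finite assms(2) by blast
qed

lemma infinite_unbounded:
  assumes "infinite (A :: nat set)" shows "\<exists>n\<in>A. K \<le> n"
proof (rule ccontr)
  assume "\<not> ?thesis"
  then have "\<forall>n\<in>A. n \<le> K" by auto
  then show False using assms finite_nat_set_iff_bounded_le by blast
qed

context
  fixes V :: "'a set" and E :: "('a \<times> 'a) set" and R :: "nat \<Rightarrow> nat \<Rightarrow> 'a" and P :: "'a list set"
  assumes Rinj: "\<forall>i\<ge>1. inj (R i)"
    and Rdisj: "\<forall>i\<ge>1. \<forall>i'\<ge>1. i \<noteq> i' \<longrightarrow> range (R i) \<inter> range (R i') = {}"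
    and Vdef: "V = (\<Union>i\<in>{1..}. range (R i)) \<union> (\<Union>p\<in>P. set p)"
    and Edef: "E = {(R i n, R i (Suc n)) | i n. 1 \<le> i}
           \<union> {(p ! k, p ! Suc k) | p k. p \<in> P \<and> Suc k < length p}"
    and Pprop: "\<forall>p\<in>P. \<exists>i\<ge>1. \<exists>i'\<ge>1. i \<noteq> i' \<and> AB_dipath V E (range (R i)) (range (R i')) p \<and>
            (\<forall>j\<ge>1. j \<noteq> i \<and> j \<noteq> i' \<longrightarrow> set p \<inter> range (R j) = {})"
    and Pdisj: "pairwise (\<lambda>p q. set p \<inter> set q = {}) P"
    and Pinf: "\<forall>i\<ge>1. \<forall>i'\<ge>1. i \<noteq> i' \<longrightarrow>
            infinite {p \<in> P. AB_dipath V E (range (R i)) (range (R i')) p}"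
    and Pstart: "\<forall>i\<ge>2. \<exists>p\<in>P. AB_dipath V E (range (R 1)) (range (R i)) p \<and> last p = R i 0"
begin

lemma RV: "i \<ge> 1 \<Longrightarrow> R i n \<in> V"
  using Vdef by auto

lemma Pdisj': "p \<in> P \<Longrightarrow> q \<in> P \<Longrightarrow> p \<noteq> q \<Longrightarrow> set p \<inter> set q = {}"
  using Pdisj unfolding pairwise_def by blast

lemma P_walk: "p \<in> P \<Longrightarrow> p \<noteq> [] \<and> set p \<subseteq> V \<and> walk_arcs E p"
  using Pprop by (auto simp: AB_dipath_def dipath_def)

lemma ray_edge: "i \<ge> 1 \<Longrightarrow> (R i n, R i (Suc n)) \<in> E"
  using Edef by blast

lemma tail_exists:
  assumes "finite X" "i \<ge> 1"
  shows "\<exists>m. \<forall>t\<ge>m. R i t \<notin> X"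
proof -
  have "finite (R i -` X)" using finite_vimageI[OF assms(1)] Rinj assms(2) by blast
  then obtain m where "\<forall>t \<in> R i -` X. t \<le> m" using finite_nat_set_iff_bounded_le by blast
  then show ?thesis by (intro exI[of _ "Suc m"]) force
qed

lemma fwd:
  assumes "i \<ge> 1" "\<forall>t\<ge>n. R i t \<notin> X" "n \<le> n'"
  shows "(R i n, R i n') \<in> (relW E (V - X))\<^sup>*"
proof -
  have "(R i n, R i (n + k)) \<in> (relW E (V - X))\<^sup>*" for k
  proof (induction k)
    case 0 then show ?case by simp
  next
    case (Suc k)
    have "(R i (n+k), R i (Suc (n+k))) \<in> relW E (V - X)"
      using ray_edge[OF assms(1)] RV[OF assms(1)] assms(2) by (auto simp: relW_def)
    then show ?case using Suc by (simp add: rtrancl_into_rtrancl)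
  qed
  from this[of "n' - n"] show ?thesis using assms(3) by simp
qed

lemma path_rt:
  assumes "p \<in> P" "set p \<inter> X = {}"
  shows "(hd p, last p) \<in> (relW E (V - X))\<^sup>*"
  using P_walk[OF assms(1)] assms(2) by (intro walk_rtrancl) auto

lemma fin_bad_paths:
  assumes "finite Y"
  shows "finite {p\<in>P. set p \<inter> Y \<noteq> {}}"
  using fin_family[of P set Y] Pdisj' assms by blast

lemma core:
  assumes X: "finite X" and i: "i \<ge> 1" and i': "i' \<ge> 1" and tl: "\<forall>t\<ge>n. R i t \<notin> X"
  shows "\<exists>K. \<forall>n'\<ge>K. (R i n, R i' n') \<in> (relW E (V - X))\<^sup>*"
proof (cases "i = i'")
  case True
  then show ?thesis using fwd[OF i tl] by blast
next
  case False
  obtain m' where m': "\<forall>t\<ge>m'. R i' t \<notin> X" using tail_exists[OF X i'] by blast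
  let ?S = "{p \<in> P. AB_dipath V E (range (R i)) (range (R i')) p}"
  let ?B = "{p\<in>P. set p \<inter> X \<noteq> {}} \<union> {p\<in>P. set p \<inter> (R i ` {..<n}) \<noteq> {}} \<union> {p\<in>P. set p \<inter> (R i' ` {..<m'}) \<noteq> {}}"
  have "finite ?B" using fin_bad_paths X by auto
  moreover have "infinite ?S" using Pinf i i' False by blast
  ultimately have "infinite (?S - ?B)" by (rule Diff_infinite_finite)
  then have "?S - ?B \<noteq> {}" by (rule infinite_imp_nonempty)
  then obtain p where p: "p \<in> ?S" "p \<notin> ?B" by blast
  have pne: "p \<noteq> []" using p by (auto simp: AB_dipath_def dipath_def)
  have "hd p \<in> range (R i)" using p by (auto simp: AB_dipath_def)
  then obtain h where h: "hd p = R i h" by blast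
  have "last p \<in> range (R i')" using p by (auto simp: AB_dipath_def)
  then obtain k where k: "last p = R i' k" by blast
  have hn: "n \<le> h"
  proof (rule ccontr)
    assume "\<not> n \<le> h"
    then have "hd p \<in> set p \<inter> (R i ` {..<n})" using h hd_in_set[OF pne] by auto
    then show False using p by blast
  qed
  have km: "m' \<le> k"
  proof (rule ccontr)
    assume "\<not> m' \<le> k"
    then have "last p \<in> set p \<inter> (R i' ` {..<m'})" using k last_in_set[OF pne] by auto
    then show False using p by blast
  qed
  have r1: "(R i n, R i h) \<in> (relW E (V - X))\<^sup>*" using fwd[OF i tl hn] .
  have r2: "(R i h, R i' k) \<in> (relW E (V - X))\<^sup>*" using path_rt[of p X] p h k by auto
  have "\<forall>n'\<ge>k. (R i n, R i' n') \<in> (relW E (V - X))\<^sup>*"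
  proof (intro allI impI)
    fix n' assume "k \<le> n'"
    then have "(R i' k, R i' n') \<in> (relW E (V - X))\<^sup>*"
      using fwd[OF i'] m' km by auto
    then show "(R i n, R i' n') \<in> (relW E (V - X))\<^sup>*" using r1 r2 by (meson rtrancl_trans)
  qed
  then show ?thesis by blast
qed

definition RVs where "RVs = (\<Union>i\<in>{1..}. range (R i))"

lemma arc_nonray:
  assumes "(a,b) \<in> E" "a \<notin> RVs" "b \<notin> RVs"
  shows "\<exists>q\<in>P. a \<in> set q \<and> b \<in> set q"
proof -
  have "(a,b) \<notin> {(R i n, R i (Suc n)) | i n. 1 \<le> i}" using assms(2) by (auto simp: RVs_def)
  then have "(a,b) \<in> {(p ! k, p ! Suc k) | p k. p \<in> P \<and> Suc k < length p}" using assms(1) Edef by blast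
  then obtain p k where "a = p!k" "b = p!Suc k" "p\<in>P" "Suc k < length p" by blast
  then show ?thesis by (intro bexI[of _ p]) auto
qed

lemma many_rays:
  assumes Q: "Q \<in> rays_antirays V E" and fin: "\<forall>i\<ge>1. finite (range (snd Q) \<inter> range (R i))"
  shows "infinite {i. i \<ge> 1 \<and> range (snd Q) \<inter> range (R i) \<noteq> {}}"
proof
  let ?f = "snd Q"
  let ?I = "{i. i \<ge> 1 \<and> range ?f \<inter> range (R i) \<noteq> {}}"
  assume If: "finite ?I"
  have "finite (\<Union>i\<in>?I. range ?f \<inter> range (R i))" using If fin by (intro finite_UN_I) auto
  moreover have "range ?f \<inter> RVs \<subseteq> (\<Union>i\<in>?I. range ?f \<inter> range (R i))" by (auto simp: RVs_def)
  ultimately have "finite (range ?f \<inter> RVs)" by (rule finite_subset[rotated])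
  then have "finite (?f -` (range ?f \<inter> RVs))"
    using finite_vimageI[of "range ?f \<inter> RVs" ?f] RA_props(1)[OF Q] by blast
  moreover have "?f -` (range ?f \<inter> RVs) = ?f -` RVs" by auto
  ultimately have "finite (?f -` RVs)" by simp
  then obtain n0 where n0: "\<forall>t \<in> ?f -` RVs. t \<le> n0" using finite_nat_set_iff_bounded_le by blast
  have nr: "?f t \<notin> RVs" if "t > n0" for t using n0 that by force
  have "?f (Suc n0) \<in> V" using RA_props(2)[OF Q] by auto
  moreover have "?f (Suc n0) \<notin> RVs" using nr by simp
  ultimately obtain p where p: "p \<in> P" "?f (Suc n0) \<in> set p" using Vdef by (auto simp: RVs_def)
  have all: "?f (Suc n0 + k) \<in> set p" for k
  proof (induction k)
    case 0 then show ?case using p by simp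
  next
    case (Suc k)
    let ?a = "?f (Suc n0 + k)" and ?b = "?f (Suc (Suc n0 + k))"
    have na: "?a \<notin> RVs" "?b \<notin> RVs" using nr by auto
    have "\<exists>q\<in>P. ?a \<in> set q \<and> ?b \<in> set q"
      using RA_props(3)[OF Q, of "Suc n0 + k"] arc_nonray na by blast
    then obtain q where q: "q \<in> P" "?a \<in> set q" "?b \<in> set q" by blast
    have "q = p" using Pdisj'[OF q(1) p(1)] q(2) Suc by blast
    then show ?case using q by simp
  qed
  have "range (\<lambda>k. ?f (Suc n0 + k)) \<subseteq> set p" using all by auto
  moreover have "inj (\<lambda>k. ?f (Suc n0 + k))"
  proof (rule injI)
    fix x y assume "?f (Suc n0 + x) = ?f (Suc n0 + y)"
    then have "Suc n0 + x = Suc n0 + y" using injD[OF RA_props(1)[OF Q]] by blast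
    then show "x = y" by simp
  qed
  ultimately have "finite (UNIV :: nat set)"
    using finite_imageD[of "\<lambda>k. ?f (Suc n0 + k)" UNIV] finite_subset[OF _ finite_set[of p]] by blast
  then show False by simp
qed

lemma ray_family_fin:
  assumes "finite Y"
  shows "finite {i\<in>{1..}. range (R i) \<inter> Y \<noteq> {}}"
  using fin_family[of "{1..}" "\<lambda>i. range (R i)" Y] Rdisj assms by auto

lemma out_prop:
  assumes Q: "Q \<in> rays_antirays V E" and X: "finite X"
  shows "\<exists>i n. i \<ge> 1 \<and> R i n \<in> range (snd Q) \<and> (\<forall>t\<ge>n. R i t \<notin> X)"
proof (cases "\<exists>i\<ge>1. infinite (range (snd Q) \<inter> range (R i))")
  case True
  then obtain i where i: "i \<ge> 1" "infinite (range (snd Q) \<inter> range (R i))" by blast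
  have sub: "range (snd Q) \<inter> range (R i) \<subseteq> R i ` {n. R i n \<in> range (snd Q)}"
  proof
    fix x assume "x \<in> range (snd Q) \<inter> range (R i)"
    then have x1: "x \<in> range (snd Q)" and x2: "x \<in> range (R i)" by auto
    from x2 obtain n where "x = R i n" by blast
    then show "x \<in> R i ` {n. R i n \<in> range (snd Q)}" using x1 by blast
  qed
  have inf: "infinite {n. R i n \<in> range (snd Q)}"
  proof
    assume "finite {n. R i n \<in> range (snd Q)}"
    then have "finite (R i ` {n. R i n \<in> range (snd Q)})" by (rule finite_imageI)
    then have "finite (range (snd Q) \<inter> range (R i))" by (rule finite_subset[OF sub])
    then show False using i(2) by blast
  qed
  obtain m where m: "\<forall>t\<ge>m. R i t \<notin> X" using tail_exists[OF X i(1)] by blast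
  obtain n where n: "n \<in> {n. R i n \<in> range (snd Q)}" "m \<le> n" using infinite_unbounded[OF inf, of m] by blast
  have tl: "\<forall>t\<ge>n. R i t \<notin> X" using m n(2) by auto
  show ?thesis using i(1) n(1) tl by blast
next
  case False
  then have inf: "infinite {i. i \<ge> 1 \<and> range (snd Q) \<inter> range (R i) \<noteq> {}}"
    using many_rays[OF Q] by blast
  have "finite {i\<in>{1..}. range (R i) \<inter> X \<noteq> {}}" using ray_family_fin[OF X] .
  then have "infinite ({i. i \<ge> 1 \<and> range (snd Q) \<inter> range (R i) \<noteq> {}} - {i\<in>{1..}. range (R i) \<inter> X \<noteq> {}})"
    using inf by (rule Diff_infinite_finite)
  then have "({i. i \<ge> 1 \<and> range (snd Q) \<inter> range (R i) \<noteq> {}} - {i\<in>{1..}. range (R i) \<inter> X \<noteq> {}}) \<noteq> {}"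
    by (rule infinite_imp_nonempty)
  then obtain i where i: "i \<ge> 1" "range (snd Q) \<inter> range (R i) \<noteq> {}" "range (R i) \<inter> X = {}"
    by blast
  obtain x where x: "x \<in> range (snd Q)" "x \<in> range (R i)" using i(2) by blast
  then obtain n where "x = R i n" by blast
  then have n: "R i n \<in> range (snd Q)" using x by simp
  have tl: "\<forall>t\<ge>n. R i t \<notin> X" using i(3) by blast
  show ?thesis using i(1) n tl by blast
qed

lemma in_prop:
  assumes Q: "Q \<in> rays_antirays V E" and X: "finite X"
  shows "\<exists>i\<ge>1. \<forall>K. \<exists>n\<ge>K. \<exists>v\<in>range (snd Q). (R i n, v) \<in> (relW E (V - X))\<^sup>*"
proof (cases "\<exists>i\<ge>1. infinite (range (snd Q) \<inter> range (R i))")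
  case True
  then obtain i where i: "i \<ge> 1" "infinite (range (snd Q) \<inter> range (R i))" by blast
  have "range (snd Q) \<inter> range (R i) \<subseteq> R i ` {n. R i n \<in> range (snd Q)}"
  proof
    fix x assume "x \<in> range (snd Q) \<inter> range (R i)"
    then have x1: "x \<in> range (snd Q)" and x2: "x \<in> range (R i)" by auto
    from x2 obtain n where "x = R i n" by blast
    then show "x \<in> R i ` {n. R i n \<in> range (snd Q)}" using x1 by blast
  qed
  note sub = this
  have inf: "infinite {n. R i n \<in> range (snd Q)}"
  proof
    assume "finite {n. R i n \<in> range (snd Q)}"
    then have "finite (R i ` {n. R i n \<in> range (snd Q)})" by (rule finite_imageI)
    then have "finite (range (snd Q) \<inter> range (R i))" by (rule finite_subset[OF sub])
    then show False using i(2) by blast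
  qed
  have "\<forall>K. \<exists>n\<ge>K. \<exists>v\<in>range (snd Q). (R i n, v) \<in> (relW E (V - X))\<^sup>*"
  proof
    fix K
    obtain n where "R i n \<in> range (snd Q)" "K \<le> n" using infinite_unbounded[OF inf] by blast
    then show "\<exists>n\<ge>K. \<exists>v\<in>range (snd Q). (R i n, v) \<in> (relW E (V - X))\<^sup>*" by blast
  qed
  then show ?thesis using i(1) by blast
next
  case False
  then have inf: "infinite {i. i \<ge> 1 \<and> range (snd Q) \<inter> range (R i) \<noteq> {}}"
    using many_rays[OF Q] by blast
  define pp where "pp i = (SOME p. p \<in> P \<and> AB_dipath V E (range (R 1)) (range (R i)) p \<and> last p = R i 0)" for i
  have pp: "pp i \<in> P \<and> AB_dipath V E (range (R 1)) (range (R i)) (pp i) \<and> last (pp i) = R i 0" if "i \<ge> 2" for i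
  proof -
    have "\<exists>p. p \<in> P \<and> AB_dipath V E (range (R 1)) (range (R i)) p \<and> last p = R i 0"
      using Pstart that by blast
    then show ?thesis unfolding pp_def by (rule someI_ex)
  qed
  have ppd: "\<forall>a\<in>{2..}. \<forall>b\<in>{2..}. a \<noteq> b \<longrightarrow> set (pp a) \<inter> set (pp b) = {}"
  proof (intro ballI impI)
    fix a b :: nat assume a: "a \<in> {2..}" and b: "b \<in> {2..}" and ab: "a \<noteq> b"
    have "range (R a) \<inter> range (R b) = {}" using Rdisj a b ab by auto
    then have "R a 0 \<noteq> R b 0" by blast
    moreover have "last (pp a) = R a 0" "last (pp b) = R b 0" using pp a b by auto
    ultimately have "pp a \<noteq> pp b" by auto
    then show "set (pp a) \<inter> set (pp b) = {}" using Pdisj' pp a b by auto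
  qed
  have "\<forall>K. \<exists>n\<ge>K. \<exists>v\<in>range (snd Q). (R 1 n, v) \<in> (relW E (V - X))\<^sup>*"
  proof
    fix K
    let ?J = "{1} \<union> {i\<in>{1..}. range (R i) \<inter> X \<noteq> {}} \<union> {i\<in>{2..}. set (pp i) \<inter> X \<noteq> {}}
       \<union> {i\<in>{2..}. set (pp i) \<inter> (R 1 ` {..<K}) \<noteq> {}}"
    have f1: "finite {i\<in>{2..}. set (pp i) \<inter> X \<noteq> {}}" using fin_family[OF ppd X] .
    have f2: "finite {i\<in>{2..}. set (pp i) \<inter> (R 1 ` {..<K}) \<noteq> {}}" using fin_family[OF ppd] by simp
    have "finite ?J" using ray_family_fin[OF X] f1 f2 by simp
    then have "infinite ({i. i \<ge> 1 \<and> range (snd Q) \<inter> range (R i) \<noteq> {}} - ?J)"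
      using inf by (rule Diff_infinite_finite)
    then have "({i. i \<ge> 1 \<and> range (snd Q) \<inter> range (R i) \<noteq> {}} - ?J) \<noteq> {}"
      by (rule infinite_imp_nonempty)
    then obtain i where i: "i \<ge> 1" "range (snd Q) \<inter> range (R i) \<noteq> {}" "i \<notin> ?J"
      by blast
    have i2: "i \<ge> 2" using i by auto
    have rX: "range (R i) \<inter> X = {}" using i by auto
    have pX: "set (pp i) \<inter> X = {}" using i i2 by auto
    have pK: "set (pp i) \<inter> (R 1 ` {..<K}) = {}" using i i2 by auto
    have ppi: "pp i \<in> P" "AB_dipath V E (range (R 1)) (range (R i)) (pp i)" "last (pp i) = R i 0"
      using pp[OF i2] by auto
    have ne: "pp i \<noteq> []" using ppi by (auto simp: AB_dipath_def dipath_def)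
    have "hd (pp i) \<in> range (R 1)" using ppi by (auto simp: AB_dipath_def)
    then obtain h where h: "hd (pp i) = R 1 h" by blast
    have hK: "K \<le> h"
    proof (rule ccontr)
      assume "\<not> K \<le> h"
      then have "hd (pp i) \<in> set (pp i) \<inter> (R 1 ` {..<K})" using h hd_in_set[OF ne] by auto
      then show False using pK by blast
    qed
    obtain x where x: "x \<in> range (snd Q)" "x \<in> range (R i)" using i(2) by blast
    then obtain k where "x = R i k" by blast
    then have k: "R i k \<in> range (snd Q)" using x by simp
    have r1: "(R 1 h, R i 0) \<in> (relW E (V - X))\<^sup>*" using path_rt[OF ppi(1) pX] h ppi(3) by simp
    have r2: "(R i 0, R i k) \<in> (relW E (V - X))\<^sup>*" using fwd[OF i(1), of 0 X k] rX by auto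
    have "(R 1 h, R i k) \<in> (relW E (V - X))\<^sup>*" using r1 r2 by (rule rtrancl_trans)
    then show "\<exists>n\<ge>K. \<exists>v\<in>range (snd Q). (R 1 n, v) \<in> (relW E (V - X))\<^sup>*"
      using hK k by blast
  qed
  then show ?thesis by (intro exI[of _ 1] conjI) simp_all
qed

lemma crd_one_end_aux: "card (ends V E) = 1"
proof (rule one_end)
  show "(True, R 1) \<in> rays_antirays V E"
    unfolding rays_antirays_def ray_def using Rinj RV ray_edge by auto
next
  fix Q S and X :: "'a set"
  assume Q: "Q \<in> rays_antirays V E" and S: "S \<in> rays_antirays V E" and X: "finite X"
  obtain i n where i: "i \<ge> 1" "R i n \<in> range (snd Q)" "\<forall>t\<ge>n. R i t \<notin> X"
    using out_prop[OF Q X] by blast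
  define u where "u = R i n"
  have u: "u \<in> range (snd Q)" "u \<notin> X" "i \<ge> 1" "\<forall>t\<ge>n. R i t \<notin> X"
    "(u, R i n) \<in> (relW E (V - X))\<^sup>*" using i unfolding u_def by auto
  obtain i' where i': "i' \<ge> 1" "\<forall>K. \<exists>n\<ge>K. \<exists>v\<in>range (snd S). (R i' n, v) \<in> (relW E (V - X))\<^sup>*"
    using in_prop[OF S X] by blast
  obtain K where K: "\<forall>n'\<ge>K. (R i n, R i' n') \<in> (relW E (V - X))\<^sup>*"
    using core[OF X u(3) i'(1) u(4)] by blast
  obtain n' v where v: "n' \<ge> K" "v \<in> range (snd S)" "(R i' n', v) \<in> (relW E (V - X))\<^sup>*"
    using i'(2) by blast
  have "(u, v) \<in> (relW E (V - X))\<^sup>*" using u(5) K v by (meson rtrancl_trans)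
  then show "\<exists>u\<in>range (snd Q). \<exists>v\<in>range (snd S). u \<notin> X \<and> (u, v) \<in> (relW E (V - X))\<^sup>*"
    using u(1,2) v(2) by blast
qed

end

lemma crd_one_end:
  assumes "complete_ray_digraph V E"
  shows "card (ends V E) = 1"
proof -
  from assms obtain R :: "nat \<Rightarrow> nat \<Rightarrow> 'a" and P where
    "(\<forall>i\<ge>1. inj (R i)) \<and>
       (\<forall>i\<ge>1. \<forall>i'\<ge>1. i \<noteq> i' \<longrightarrow> range (R i) \<inter> range (R i') = {}) \<and>
       V = (\<Union>i\<in>{1..}. range (R i)) \<union> (\<Union>p\<in>P. set p) \<and>
       E = {(R i n, R i (Suc n)) | i n. 1 \<le> i}
           \<union> {(p ! k, p ! Suc k) | p k. p \<in> P \<and> Suc k < length p} \<and>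
       (\<forall>p\<in>P. \<exists>i\<ge>1. \<exists>i'\<ge>1. i \<noteq> i' \<and> AB_dipath V E (range (R i)) (range (R i')) p \<and>
            (\<forall>j\<ge>1. j \<noteq> i \<and> j \<noteq> i' \<longrightarrow> set p \<inter> range (R j) = {})) \<and>
       pairwise (\<lambda>p q. set p \<inter> set q = {}) P \<and>
       (\<forall>i\<ge>1. \<forall>i'\<ge>1. i \<noteq> i' \<longrightarrow>
            infinite {p \<in> P. AB_dipath V E (range (R i)) (range (R i')) p}) \<and>
       (\<forall>i\<ge>2. \<exists>p\<in>P. AB_dipath V E (range (R 1)) (range (R i)) p \<and> last p = R i 0)"
    unfolding complete_ray_digraph_def by blast
  then show ?thesis by (elim conjE) (rule crd_one_end_aux; assumption)
qed



definition Wb :: "nat \<Rightarrow> (nat \<times> nat) set" where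
  "Wb N = {(i,j). 1 \<le> i \<and> 1 \<le> j \<and> (N < i \<or> N < j)}"

lemma Wb_iff[simp]: "(i,j) \<in> Wb N \<longleftrightarrow> 1 \<le> i \<and> 1 \<le> j \<and> (N < i \<or> N < j)"
  by (simp add: Wb_def)

lemma relW_iff[simp]: "(a,b) \<in> relW E W \<longleftrightarrow> (a,b) \<in> E \<and> a \<in> W \<and> b \<in> W"
  by (simp add: relW_def)

lemma rt_step: "(a,b) \<in> E \<Longrightarrow> a \<in> W \<Longrightarrow> b \<in> W \<Longrightarrow> (a,b) \<in> (relW E W)\<^sup>*"
  by (rule r_into_rtrancl) simp

lemma row_walk:
  assumes row: "\<And>i j. 1 \<le> i \<Longrightarrow> 1 \<le> j \<Longrightarrow> ((i,j),(i,Suc j)) \<in> E"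
    and "(i,j) \<in> Wb N"
  shows "((i,j),(i,j+k)) \<in> (relW E (Wb N))\<^sup>*"
proof (induction k)
  case 0 then show ?case by simp
next
  case (Suc k)
  have "((i,j+k),(i,Suc (j+k))) \<in> relW E (Wb N)"
    using assms row[of i "j+k"] by auto
  then show ?case using Suc by (simp add: rtrancl_into_rtrancl)
qed

lemma row_walk':
  assumes row: "\<And>i j. 1 \<le> i \<Longrightarrow> 1 \<le> j \<Longrightarrow> ((i,j),(i,Suc j)) \<in> E"
    and "(i,j) \<in> Wb N" "j \<le> j'"
  shows "((i,j),(i,j')) \<in> (relW E (Wb N))\<^sup>*"
  using row_walk[OF row assms(2), of "j' - j"] assms(3) by simp

definition box :: "nat \<Rightarrow> (nat \<times> nat) set" where
  "box M = {(i,j). i \<le> M \<and> j \<le> M}"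

lemma finite_box: "finite (box M)"
  by (rule finite_subset[of _ "{..M} \<times> {..M}"]) (auto simp: box_def)

lemma finite_bounded_pairs:
  assumes "finite (X :: (nat \<times> nat) set)"
  shows "\<exists>N. X \<subseteq> box N"
proof -
  have "finite (fst ` X \<union> snd ` X)" using assms by auto
  then obtain N where N': "\<forall>x \<in> fst ` X \<union> snd ` X. x \<le> N"
    using finite_nat_set_iff_bounded_le by blast
  then have "X \<subseteq> box N"
  proof (intro subsetI)
    fix x assume "x \<in> X"
    then have "fst x \<le> N" "snd x \<le> N" using N' by auto
    then show "x \<in> box N" by (cases x) (auto simp: box_def)
  qed
  then show ?thesis by blast
qed

lemma avoid_finite: "infinite A \<Longrightarrow> finite B \<Longrightarrow> \<exists>a\<in>A. a \<notin> B"
  using finite_subset subsetI by metis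

lemma grid_one_end:
  fixes V :: "(nat \<times> nat) set" and E E' :: "((nat \<times> nat) \<times> (nat \<times> nat)) set"
  assumes VV: "V \<subseteq> qg_V"
    and Q0: "Q0 \<in> rays_antirays V E'"
    and KA: "\<And>N u. u \<in> Wb (3*N+3) \<Longrightarrow> \<exists>c0. \<forall>c\<ge>c0. (u,(1,c)) \<in> (relW E (Wb N))\<^sup>*"
    and KB: "\<And>N i j. (i,j) \<in> Wb (3*N+3) \<Longrightarrow> \<exists>c. i + j \<le> 2*c+5 \<and> ((1,c),(i,j)) \<in> (relW E (Wb N))\<^sup>*"
    and lift: "\<And>N u v. u \<in> V \<Longrightarrow> v \<in> V \<Longrightarrow> (u,v) \<in> (relW E (Wb N))\<^sup>* \<Longrightarrow>
        (u,v) \<in> (relW E' (V \<inter> Wb N))\<^sup>*"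
  shows "card (ends V E') = 1"
proof (rule one_end[OF Q0])
  fix Q R X
  assume Q: "Q \<in> rays_antirays V E'" and R: "R \<in> rays_antirays V E'" and X: "finite (X :: (nat \<times> nat) set)"
  obtain N where N: "X \<subseteq> box N" using finite_bounded_pairs[OF X] by blast
  have "\<exists>u \<in> range (snd Q). u \<notin> box (3*N+3)"
    using avoid_finite[OF RA_infinite[OF Q] finite_box] .
  then obtain u where u: "u \<in> range (snd Q)" "u \<notin> box (3*N+3)" by blast
  have uV: "u \<in> V" using u RA_props(2)[OF Q] by auto
  have uW: "u \<in> Wb (3*N+3)" using uV VV u(2) by (cases u) (auto simp: qg_V_def box_def)
  obtain c0 where c0: "\<forall>c\<ge>c0. (u,(1,c)) \<in> (relW E (Wb N))\<^sup>*" using KA[OF uW] by blast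
  let ?M = "max (3*N+3) (2*c0+5)"
  have "\<exists>v \<in> range (snd R). v \<notin> box ?M"
    using avoid_finite[OF RA_infinite[OF R] finite_box] .
  then obtain w where w: "w \<in> range (snd R)" "w \<notin> box ?M" by blast
  obtain i j where "w = (i,j)" by (cases w)
  then have v: "(i,j) \<in> range (snd R)" "(i,j) \<notin> box ?M" using w by auto
  have vV: "(i,j) \<in> V" using v RA_props(2)[OF R] by auto
  have vW: "(i,j) \<in> Wb (3*N+3)" using vV VV v(2) by (auto simp: qg_V_def box_def)
  obtain c where c: "i + j \<le> 2*c+5" "((1,c),(i,j)) \<in> (relW E (Wb N))\<^sup>*" using KB[OF vW] by blast
  have "i + j > 2*c0+5" using v(2) by (auto simp: box_def)
  then have "c \<ge> c0" using c(1) by linarith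
  then have "(u,(1,c)) \<in> (relW E (Wb N))\<^sup>*" using c0 by blast
  then have "(u,(i,j)) \<in> (relW E (Wb N))\<^sup>*" using c(2) by (rule rtrancl_trans)
  then have r1: "(u,(i,j)) \<in> (relW E' (V \<inter> Wb N))\<^sup>*" by (rule lift[OF uV vV])
  have "relW E' (V \<inter> Wb N) \<subseteq> relW E' (V - X)"
    using N by (auto simp: relW_def box_def)
  then have "(u,(i,j)) \<in> (relW E' (V - X))\<^sup>*" using r1 rtrancl_mono by blast
  moreover have "u \<notin> X" using N u(2) by (auto simp: box_def)
  ultimately show "\<exists>u\<in>range (snd Q). \<exists>v\<in>range (snd R). u \<notin> X \<and> (u, v) \<in> (relW E' (V - X))\<^sup>*"
    using u(1) v(1) by blast
qed

lemma lift_same: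
  assumes "V = qg_V" "(u,v) \<in> (relW E (Wb N))\<^sup>*"
  shows "(u,v) \<in> (relW E (V \<inter> Wb N))\<^sup>*"
proof -
  have "V \<inter> Wb N = Wb N" using assms(1) by (auto simp: qg_V_def Wb_def)
  then show ?thesis using assms(2) by simp
qed



lemma acq_row: "1 \<le> i \<Longrightarrow> 1 \<le> j \<Longrightarrow> ((i,j),(i,Suc j)) \<in> acq_E"
  unfolding acq_E_def qg_rayE_def by auto

lemma acq_12: "odd j \<Longrightarrow> ((1,j),(2,j)) \<in> acq_E"
  unfolding acq_E_def by auto

lemma acq_down: "2 \<le> i \<Longrightarrow> odd j \<Longrightarrow> ((i,j+3),(i+1,j)) \<in> acq_E"
  unfolding acq_E_def by blast

lemma acq_up: "2 \<le> i \<Longrightarrow> ((i,2),(1,2*(i-1))) \<in> acq_E"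
  unfolding acq_E_def by blast

lemma acq_asc:
  "2 \<le> r \<Longrightarrow> odd b \<Longrightarrow> (\<forall>s\<le>t. (r+s, b+2*(t-s)) \<in> Wb N) \<Longrightarrow>
    ((r, b+2*t),(r+t,b)) \<in> (relW acq_E (Wb N))\<^sup>*"
proof (induction t arbitrary: r)
  case 0 then show ?case by simp
next
  case (Suc t)
  have h0: "(r, b+2*t+2) \<in> Wb N" using Suc.prems(3)[rule_format, of 0] by simp
  have h1: "(r+1, b+2*t) \<in> Wb N" using Suc.prems(3)[rule_format, of 1] by simp
  have e1: "((r, b+2*t+2),(r, Suc (b+2*t+2))) \<in> (relW acq_E (Wb N))\<^sup>*"
    using acq_row[of r "b+2*t+2"] h0 Suc.prems(1) by (intro rt_step) auto
  have e2: "((r, Suc (b+2*t+2)),(r+1, b+2*t)) \<in> (relW acq_E (Wb N))\<^sup>*"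
  proof (rule rt_step)
    have o: "odd (b+2*t)" using Suc.prems(2) by simp
    have eq: "b+2*t+3 = Suc (b+2*t+2)" by simp
    show "((r, Suc (b+2*t+2)),(r+1, b+2*t)) \<in> acq_E"
      using acq_down[OF Suc.prems(1) o] eq by metis
    show "(r, Suc (b+2*t+2)) \<in> Wb N" using h0 by auto
    show "(r+1, b+2*t) \<in> Wb N" using h1 by auto
  qed
  have e3: "((r+1, b+2*t),(r+1+t, b)) \<in> (relW acq_E (Wb N))\<^sup>*"
  proof (rule Suc.IH)
    show "2 \<le> r + 1" using Suc.prems by simp
    show "odd b" using Suc.prems by simp
    show "\<forall>s\<le>t. (r + 1 + s, b + 2 * (t - s)) \<in> Wb N"
    proof (intro allI impI)
      fix s assume "s \<le> t"
      then show "(r + 1 + s, b + 2 * (t - s)) \<in> Wb N"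
        using Suc.prems(3)[rule_format, of "Suc s"] by simp
    qed
  qed
  have "((r, b+2*Suc t),(r+Suc t, b)) \<in> (relW acq_E (Wb N))\<^sup>*"
    using e1 e2 e3 by (simp add: rtrancl_trans)
  then show ?case by simp
qed

lemma acq_KA:
  assumes u: "u \<in> Wb (3*N+3)"
  shows "\<exists>c0. \<forall>c\<ge>c0. (u,(1,c)) \<in> (relW acq_E (Wb N))\<^sup>*"
proof -
  obtain i j where uij: "u = (i,j)" by (cases u)
  have ij: "1 \<le> i" "1 \<le> j" "3*N+3 < i \<or> 3*N+3 < j" using u uij by auto
  have uN: "(i,j) \<in> Wb N" using ij by auto
  show ?thesis
  proof (cases "i = 1")
    case True
    show ?thesis
      using row_walk'[OF acq_row uN] True uij by (intro exI[of _ j]) auto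
  next
    case False
    then have i2: "2 \<le> i" using ij by simp
    have "odd (if odd j then j else j+1)" by auto
    then obtain t where a0: "(if odd j then j else j+1) = 2*t + 1"
      by (rule oddE)
    then have a: "(if odd j then j else j+1) = 1 + 2*t" by simp
    define a where "a = 1 + 2*t"
    have aj: "j \<le> a" "a \<le> j + 1" using a a_def by (auto split: if_splits)
    have r1: "((i,j),(i,a)) \<in> (relW acq_E (Wb N))\<^sup>*"
      using row_walk'[OF acq_row uN aj(1)] .
    have cond: "\<forall>s\<le>t. (i+s, 1+2*(t-s)) \<in> Wb N"
    proof (intro allI impI)
      fix s assume s: "s \<le> t"
      show "(i+s, 1+2*(t-s)) \<in> Wb N"
      proof (cases "N < i + s")
        case True then show ?thesis using ij by auto
      next
        case False
        then have "3*N+3 < j" "s < N" using ij i2 by auto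
        then show ?thesis using aj a_def s ij by auto
      qed
    qed
    have r2: "((i,a),(i+t,1)) \<in> (relW acq_E (Wb N))\<^sup>*"
      using acq_asc[OF i2 _ cond] a_def by simp
    have it: "N < i + t"
    proof (cases "N < i")
      case True then show ?thesis by simp
    next
      case False
      then have "3*N+3 < j" using ij by auto
      then show ?thesis using aj a_def by auto
    qed
    have r3: "((i+t,1),(i+t,2)) \<in> (relW acq_E (Wb N))\<^sup>*"
      using acq_row[of "i+t" 1] it i2 by (intro rt_step) (auto simp: numeral_2_eq_2)
    have r4: "((i+t,2),(1,2*(i+t-1))) \<in> (relW acq_E (Wb N))\<^sup>*"
      using acq_up[of "i+t"] it i2 by (intro rt_step) auto
    have w1: "(1, 2*(i+t-1)) \<in> Wb N" using it i2 by auto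
    have "\<forall>c\<ge>2*(i+t-1). (u,(1,c)) \<in> (relW acq_E (Wb N))\<^sup>*"
    proof (intro allI impI)
      fix c assume "2*(i+t-1) \<le> c"
      then have "((1,2*(i+t-1)),(1,c)) \<in> (relW acq_E (Wb N))\<^sup>*"
        using row_walk'[OF acq_row w1] by blast
      then show "(u,(1,c)) \<in> (relW acq_E (Wb N))\<^sup>*"
        unfolding uij by (rule rtrancl_trans[OF rtrancl_trans[OF rtrancl_trans[OF rtrancl_trans[OF r1 r2] r3] r4]])
    qed
    then show ?thesis by blast
  qed
qed

lemma acq_KB:
  assumes v: "(i,j) \<in> Wb (3*N+3)"
  shows "\<exists>c. i + j \<le> 2*c+5 \<and> ((1,c),(i,j)) \<in> (relW acq_E (Wb N))\<^sup>*"
proof -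
  have ij: "1 \<le> i" "1 \<le> j" "3*N+3 < i \<or> 3*N+3 < j" using v by auto
  show ?thesis
  proof (cases "i = 1")
    case True
    then show ?thesis by (intro exI[of _ j]) auto
  next
    case False
    then have i2: "2 \<le> i" using ij by simp
    define b where "b = (if odd j then j else j - 1)"
    have b: "odd b" "b \<le> j" "j \<le> b + 1" "1 \<le> b" using ij(2) by (auto simp: b_def)
    define t where "t = i - 2"
    have it: "i = 2 + t" using i2 t_def by simp
    define c where "c = b + 2*t"
    have oc: "odd c" using b(1) c_def by simp
    have cond: "\<forall>s\<le>t. (2+s, b+2*(t-s)) \<in> Wb N"
    proof (intro allI impI)
      fix s assume s: "s \<le> t"
      show "(2+s, b+2*(t-s)) \<in> Wb N"
      proof (cases "3*N+3 < j")
        case True then show ?thesis using b by auto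
      next
        case False
        then have "3*N+3 < i" using ij by auto
        then show ?thesis using b s it by auto
      qed
    qed
    have wc: "N < c"
    proof (cases "3*N+3 < j")
      case True then show ?thesis using b c_def by auto
    next
      case False
      then have "3*N+3 < i" using ij by auto
      then show ?thesis using b it c_def by auto
    qed
    have r1: "((1,c),(2,c)) \<in> (relW acq_E (Wb N))\<^sup>*"
      using acq_12[OF oc] wc b c_def by (intro rt_step) auto
    have r2: "((2,c),(i,b)) \<in> (relW acq_E (Wb N))\<^sup>*"
      using acq_asc[of 2 b t N] cond b(1) it c_def by simp
    have wb: "(i,b) \<in> Wb N" using cond[rule_format, of t] it by simp
    have r3: "((i,b),(i,j)) \<in> (relW acq_E (Wb N))\<^sup>*"
      using row_walk'[OF acq_row wb b(2)] .
    have "i + j \<le> 2*c+5" using b it c_def by auto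
    moreover have "((1,c),(i,j)) \<in> (relW acq_E (Wb N))\<^sup>*"
      by (rule rtrancl_trans[OF rtrancl_trans[OF r1 r2] r3])
    ultimately show ?thesis by blast
  qed
qed

lemma acq_ray: "(True, \<lambda>n. (1, Suc n)) \<in> rays_antirays qg_V acq_E"
  unfolding rays_antirays_def ray_def
  using acq_row by (auto simp: inj_def qg_V_def)

lemma acq_one_end: "card (ends qg_V acq_E) = 1"
  by (rule grid_one_end[OF _ acq_ray acq_KA acq_KB lift_same]) auto



lemma dcq_row: "1 \<le> i \<Longrightarrow> 1 \<le> j \<Longrightarrow> ((i,j),(i,Suc j)) \<in> dcq_E"
  unfolding dcq_E_def qg_rayE_def by auto

lemma dcq_up: "1 \<le> i \<Longrightarrow> 1 \<le> j \<Longrightarrow> even j \<Longrightarrow> ((i+1,j),(i,j+1)) \<in> dcq_E"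
  unfolding dcq_E_def by blast

lemma dcq_jump: "1 \<le> i \<Longrightarrow> ((1,2*i),(i+1,1)) \<in> dcq_E"
  unfolding dcq_E_def by blast

lemma dcq_upw:
  "1 \<le> r \<Longrightarrow> even e \<Longrightarrow> 2 \<le> e \<Longrightarrow> (\<forall>s\<le>t. N < r+s \<or> N+1 < e+2*(t-s)) \<Longrightarrow>
    ((r+t, e),(r, e+2*t)) \<in> (relW dcq_E (Wb N))\<^sup>*"
proof (induction t arbitrary: e)
  case 0 then show ?case by simp
next
  case (Suc t)
  have h0: "N < r+t+1 \<or> N+1 < e" using Suc.prems(4)[rule_format, of "Suc t"] by simp
  have h1: "N < r+t \<or> N+1 < e+2" using Suc.prems(4)[rule_format, of t] by simp
  have e1: "((r+t+1, e),(r+t, e+1)) \<in> (relW dcq_E (Wb N))\<^sup>*"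
    using dcq_up[of "r+t" e] Suc.prems h0 h1 by (intro rt_step) auto
  have e2: "((r+t, e+1),(r+t, Suc (e+1))) \<in> (relW dcq_E (Wb N))\<^sup>*"
    using dcq_row[of "r+t" "e+1"] Suc.prems h0 h1 by (intro rt_step) auto
  have e3: "((r+t, e+2),(r, e+2+2*t)) \<in> (relW dcq_E (Wb N))\<^sup>*"
  proof (rule Suc.IH)
    show "1 \<le> r" "even (e+2)" "2 \<le> e+2" using Suc.prems by auto
    show "\<forall>s\<le>t. N < r + s \<or> N + 1 < e + 2 + 2 * (t - s)"
    proof (intro allI impI)
      fix s assume "s \<le> t"
      then show "N < r + s \<or> N + 1 < e + 2 + 2 * (t - s)"
        using Suc.prems(4)[rule_format, of s] by (simp add: Suc_diff_le)
    qed
  qed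
  have "((r+t+1, e),(r, e+2+2*t)) \<in> (relW dcq_E (Wb N))\<^sup>*"
    using e1 e2 e3 by (simp add: rtrancl_trans)
  then show ?case by (simp add: algebra_simps)
qed

lemma dcq_KA:
  assumes u: "u \<in> Wb (3*N+3)"
  shows "\<exists>c0. \<forall>c\<ge>c0. (u,(1,c)) \<in> (relW dcq_E (Wb N))\<^sup>*"
proof -
  obtain i j where uij: "u = (i,j)" by (cases u)
  have ij: "1 \<le> i" "1 \<le> j" "3*N+3 < i \<or> 3*N+3 < j" using u uij by auto
  have uN: "(i,j) \<in> Wb N" using ij by auto
  define e where "e = (if even j then j else j+1)"
  have e: "even e" "j \<le> e" "e \<le> j+1" "2 \<le> e" using ij(2) by (auto simp: e_def)
  have r1: "((i,j),(i,e)) \<in> (relW dcq_E (Wb N))\<^sup>*"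
    using row_walk'[OF dcq_row uN e(2)] .
  have cond: "\<forall>s\<le>i-1. N < 1+s \<or> N+1 < e+2*(i-1-s)"
  proof (intro allI impI)
    fix s assume s: "s \<le> i - 1"
    show "N < 1+s \<or> N+1 < e+2*(i-1-s)"
    proof (cases "3*N+3 < j")
      case True then show ?thesis using e by auto
    next
      case False
      then have "3*N+3 < i" using ij by auto
      then show ?thesis using s e by auto
    qed
  qed
  have r2: "((i,e),(1,e+2*(i-1))) \<in> (relW dcq_E (Wb N))\<^sup>*"
    using dcq_upw[of 1 e "i-1" N, OF _ e(1) e(4) cond] ij by simp
  have w1: "(1, e+2*(i-1)) \<in> Wb N" using cond[rule_format, of 0] e by auto
  have "\<forall>c\<ge>e+2*(i-1). (u,(1,c)) \<in> (relW dcq_E (Wb N))\<^sup>*"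
  proof (intro allI impI)
    fix c assume "e+2*(i-1) \<le> c"
    then have "((1,e+2*(i-1)),(1,c)) \<in> (relW dcq_E (Wb N))\<^sup>*"
      using row_walk'[OF dcq_row w1] by blast
    then show "(u,(1,c)) \<in> (relW dcq_E (Wb N))\<^sup>*"
      unfolding uij by (rule rtrancl_trans[OF rtrancl_trans[OF r1 r2]])
  qed
  then show ?thesis by blast
qed

lemma dcq_KB:
  assumes v: "(i,j) \<in> Wb (3*N+3)"
  shows "\<exists>c. i + j \<le> 2*c+5 \<and> ((1,c),(i,j)) \<in> (relW dcq_E (Wb N))\<^sup>*"
proof -
  have ij: "1 \<le> i" "1 \<le> j" "3*N+3 < i \<or> 3*N+3 < j" using v by auto
  show ?thesis
  proof (cases "i = 1")
    case True
    then show ?thesis by (intro exI[of _ j]) auto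
  next
    case False
    then have i2: "2 \<le> i" using ij by simp
    show ?thesis
    proof (cases "j = 1")
      case True
      then have iN: "3*N+3 < i" using ij by auto
      have "((1,2*(i-1)),(i-1+1,1)) \<in> dcq_E" using dcq_jump[of "i-1"] i2 by simp
      then have "((1,2*(i-1)),(i,1)) \<in> dcq_E" using i2 by simp
      then have "((1,2*(i-1)),(i,j)) \<in> (relW dcq_E (Wb N))\<^sup>*"
        using iN i2 True by (intro rt_step) auto
      moreover have "i + j \<le> 2*(2*(i-1))+5" using True i2 by auto
      ultimately show ?thesis by blast
    next
      case False
      then have j2: "2 \<le> j" using ij by simp
      obtain t where t: "j = 2+2*t \<or> j = 3+2*t"
      proof -
        have "j - 2 = 2*((j-2) div 2) \<or> j - 2 = 2*((j-2) div 2) + 1" by presburger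
        then have "j = 2 + 2*((j-2) div 2) \<or> j = 3 + 2*((j-2) div 2)" using j2 by linarith
        then show ?thesis using that by blast
      qed
      have tj: "2 + 2*t \<le> j" "j \<le> 3 + 2*t" using t by auto
      have big: "N < i + t"
      proof (cases "N < i")
        case True then show ?thesis by simp
      next
        case False
        then have "3*N+3 < j" using ij by auto
        then show ?thesis using tj by auto
      qed
      have cond: "\<forall>s\<le>t. N < i+s \<or> N+1 < 2+2*(t-s)"
      proof (intro allI impI)
        fix s assume s: "s \<le> t"
        show "N < i+s \<or> N+1 < 2+2*(t-s)"
        proof (cases "N < i")
          case True then show ?thesis by simp
        next
          case False
          then have "3*N+3 < j" using ij by auto
          then show ?thesis using tj s by auto
        qed
      qed
      have "((1,2*(i+t-1)),(i+t-1+1,1)) \<in> dcq_E" using dcq_jump[of "i+t-1"] i2 by simp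
      then have "((1,2*(i+t-1)),(i+t,1)) \<in> dcq_E" using i2 by simp
      then have r1: "((1,2*(i+t-1)),(i+t,1)) \<in> (relW dcq_E (Wb N))\<^sup>*"
        using big i2 by (intro rt_step) auto
      have r2: "((i+t,1),(i+t,2)) \<in> (relW dcq_E (Wb N))\<^sup>*"
        using dcq_row[of "i+t" 1] big i2 by (intro rt_step) (auto simp: numeral_2_eq_2)
      have r3: "((i+t,2),(i,2+2*t)) \<in> (relW dcq_E (Wb N))\<^sup>*"
        using dcq_upw[of i 2 t N] cond ij by simp
      have wb: "(i,2+2*t) \<in> Wb N" using cond[rule_format, of 0] ij by auto
      have r4: "((i,2+2*t),(i,j)) \<in> (relW dcq_E (Wb N))\<^sup>*"
        using row_walk'[OF dcq_row wb tj(1)] .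
      have "i + j \<le> 2*(2*(i+t-1))+5" using tj i2 by auto
      moreover have "((1,2*(i+t-1)),(i,j)) \<in> (relW dcq_E (Wb N))\<^sup>*"
        by (rule rtrancl_trans[OF rtrancl_trans[OF rtrancl_trans[OF r1 r2] r3] r4])
      ultimately show ?thesis by blast
    qed
  qed
qed

lemma dcq_ray: "(True, \<lambda>n. (1, Suc n)) \<in> rays_antirays qg_V dcq_E"
  unfolding rays_antirays_def ray_def
  using dcq_row by (auto simp: inj_def qg_V_def)

lemma dcq_one_end: "card (ends qg_V dcq_E) = 1"
  by (rule grid_one_end[OF _ dcq_ray dcq_KA dcq_KB lift_same]) auto



lemma b_row: "1 \<le> i \<Longrightarrow> 1 \<le> j \<Longrightarrow> ((i,j),(i,Suc j)) \<in> bqg0_E"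
  unfolding bqg0_E_def qg_rayE_def by auto

lemma b_down: "1 \<le> i \<Longrightarrow> ((i,4*m+7),(i+1,4*m+1)) \<in> bqg0_E"
  unfolding bqg0_E_def by blast

lemma b_up: "1 \<le> i \<Longrightarrow> ((i+1,4*m+2),(i,4*m+8)) \<in> bqg0_E"
  unfolding bqg0_E_def by blast

lemma b_upw:
  "1 \<le> r \<Longrightarrow> (\<forall>s\<le>t. N < r+s \<or> N+2 < 4*m+2+8*(t-s)) \<Longrightarrow>
    ((r+t, 4*m+2),(r, 4*m+2+8*t)) \<in> (relW bqg0_E (Wb N))\<^sup>*"
proof (induction t arbitrary: m)
  case 0 then show ?case by simp
next
  case (Suc t)
  have h0: "N < r+t+1 \<or> N+2 < 4*m+2" using Suc.prems(2)[rule_format, of "Suc t"] by simp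
  have h1: "N < r+t \<or> N+2 < 4*m+10" using Suc.prems(2)[rule_format, of t] by simp
  have e1: "((r+t+1, 4*m+2),(r+t, 4*m+8)) \<in> (relW bqg0_E (Wb N))\<^sup>*"
    using b_up[of "r+t" m] Suc.prems h0 h1 by (intro rt_step) auto
  have w: "(r+t, 4*m+8) \<in> Wb N" using Suc.prems h1 by auto
  have e2: "((r+t, 4*m+8),(r+t, 4*(m+2)+2)) \<in> (relW bqg0_E (Wb N))\<^sup>*"
    using row_walk'[OF b_row w] by simp
  have e3: "((r+t, 4*(m+2)+2),(r, 4*(m+2)+2+8*t)) \<in> (relW bqg0_E (Wb N))\<^sup>*"
  proof (rule Suc.IH)
    show "1 \<le> r" using Suc.prems by auto
    show "\<forall>s\<le>t. N < r + s \<or> N + 2 < 4 * (m + 2) + 2 + 8 * (t - s)"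
    proof (intro allI impI)
      fix s assume "s \<le> t"
      then show "N < r + s \<or> N + 2 < 4 * (m + 2) + 2 + 8 * (t - s)"
        using Suc.prems(2)[rule_format, of s] by (simp add: Suc_diff_le)
    qed
  qed
  have "((r+t+1, 4*m+2),(r, 4*(m+2)+2+8*t)) \<in> (relW bqg0_E (Wb N))\<^sup>*"
    by (rule rtrancl_trans[OF rtrancl_trans[OF e1 e2] e3])
  then show ?case by (simp add: algebra_simps)
qed

lemma b_downw:
  "1 \<le> r \<Longrightarrow> (\<forall>s\<le>t. N < r+s \<or> N+2 < 4*m+3+4*(t-s)) \<Longrightarrow>
    ((r, 4*m+3+4*t),(r+t, 4*m+3)) \<in> (relW bqg0_E (Wb N))\<^sup>*"
proof (induction t arbitrary: r)
  case 0 then show ?case by simp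
next
  case (Suc t)
  have h0: "N < r \<or> N+2 < 4*m+3+4*(Suc t)" using Suc.prems(2)[rule_format, of 0] by simp
  have h1: "N < r+1 \<or> N+2 < 4*m+3+4*t" using Suc.prems(2)[rule_format, of 1] by simp
  have e1: "((r, 4*(m+t)+7),(r+1, 4*(m+t)+1)) \<in> (relW bqg0_E (Wb N))\<^sup>*"
    using b_down[of r "m+t"] Suc.prems h0 h1 by (intro rt_step) auto
  have w: "(r+1, 4*(m+t)+1) \<in> Wb N" using Suc.prems h1 by auto
  have e2: "((r+1, 4*(m+t)+1),(r+1, 4*m+3+4*t)) \<in> (relW bqg0_E (Wb N))\<^sup>*"
    using row_walk'[OF b_row w] by simp
  have e3: "((r+1, 4*m+3+4*t),(r+1+t, 4*m+3)) \<in> (relW bqg0_E (Wb N))\<^sup>*"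
  proof (rule Suc.IH)
    show "1 \<le> r+1" by simp
    show "\<forall>s\<le>t. N < r + 1 + s \<or> N + 2 < 4 * m + 3 + 4 * (t - s)"
    proof (intro allI impI)
      fix s assume "s \<le> t"
      then show "N < r + 1 + s \<or> N + 2 < 4 * m + 3 + 4 * (t - s)"
        using Suc.prems(2)[rule_format, of "Suc s"] by simp
    qed
  qed
  have "((r, 4*(m+t)+7),(r+1+t, 4*m+3)) \<in> (relW bqg0_E (Wb N))\<^sup>*"
    by (rule rtrancl_trans[OF rtrancl_trans[OF e1 e2] e3])
  then show ?case by (simp add: algebra_simps)
qed

lemma b_KA:
  assumes u: "u \<in> Wb (3*N+3)"
  shows "\<exists>c0. \<forall>c\<ge>c0. (u,(1,c)) \<in> (relW bqg0_E (Wb N))\<^sup>*"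
proof -
  obtain i j where uij: "u = (i,j)" by (cases u)
  have ij: "1 \<le> i" "1 \<le> j" "3*N+3 < i \<or> 3*N+3 < j" using u uij by auto
  have uN: "(i,j) \<in> Wb N" using ij by auto
  define m where "m = (j+1) div 4"
  have m: "j \<le> 4*m+2" unfolding m_def by presburger
  have r1: "((i,j),(i,4*m+2)) \<in> (relW bqg0_E (Wb N))\<^sup>*"
    using row_walk'[OF b_row uN m] .
  have cond: "\<forall>s\<le>i-1. N < 1+s \<or> N+2 < 4*m+2+8*(i-1-s)"
  proof (intro allI impI)
    fix s assume s: "s \<le> i - 1"
    show "N < 1+s \<or> N+2 < 4*m+2+8*(i-1-s)"
    proof (cases "3*N+3 < j")
      case True then show ?thesis using m by auto
    next
      case False
      then have "3*N+3 < i" using ij by auto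
      then show ?thesis using s by auto
    qed
  qed
  have r2: "((i,4*m+2),(1,4*m+2+8*(i-1))) \<in> (relW bqg0_E (Wb N))\<^sup>*"
    using b_upw[of 1 "i-1" N m, OF _ cond] ij by simp
  have w1: "(1, 4*m+2+8*(i-1)) \<in> Wb N" using cond[rule_format, of 0] by auto
  have "\<forall>c\<ge>4*m+2+8*(i-1). (u,(1,c)) \<in> (relW bqg0_E (Wb N))\<^sup>*"
  proof (intro allI impI)
    fix c assume "4*m+2+8*(i-1) \<le> c"
    then have "((1,4*m+2+8*(i-1)),(1,c)) \<in> (relW bqg0_E (Wb N))\<^sup>*"
      using row_walk'[OF b_row w1] by blast
    then show "(u,(1,c)) \<in> (relW bqg0_E (Wb N))\<^sup>*"
      unfolding uij by (rule rtrancl_trans[OF rtrancl_trans[OF r1 r2]])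
  qed
  then show ?thesis by blast
qed

lemma b_KB:
  assumes v: "(i,j) \<in> Wb (3*N+3)"
  shows "\<exists>c. i + j \<le> 2*c+5 \<and> ((1,c),(i,j)) \<in> (relW bqg0_E (Wb N))\<^sup>*"
proof -
  have ij: "1 \<le> i" "1 \<le> j" "3*N+3 < i \<or> 3*N+3 < j" using v by auto
  show ?thesis
  proof (cases "i = 1")
    case True
    then show ?thesis by (intro exI[of _ j]) auto
  next
    case False
    then have i2: "2 \<le> i" using ij by simp
    define m where "m = (j - 1) div 4"
    have m: "4*m+1 \<le> j" "j \<le> 4*m+4" using ij(2) unfolding m_def by presburger+
    have cond: "\<forall>s\<le>i-2. N < 1+s \<or> N+2 < 4*(m+1)+3+4*(i-2-s)"
    proof (intro allI impI)
      fix s assume s: "s \<le> i - 2"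
      show "N < 1+s \<or> N+2 < 4*(m+1)+3+4*(i-2-s)"
      proof (cases "3*N+3 < j")
        case True then show ?thesis using m by auto
      next
        case False
        then have "3*N+3 < i" using ij by auto
        then show ?thesis using s by auto
      qed
    qed
    have r1: "((1, 4*(m+1)+3+4*(i-2)),(1+(i-2), 4*(m+1)+3)) \<in> (relW bqg0_E (Wb N))\<^sup>*"
      using b_downw[of 1 "i-2" N "m+1", OF _ cond] by simp
    have w0: "(i-1, 4*m+7) \<in> Wb N" using cond[rule_format, of "i-2"] i2 by auto
    have w1: "(i, 4*m+1) \<in> Wb N"
    proof (cases "3*N+3 < j")
      case True then show ?thesis using m ij by auto
    next
      case False then show ?thesis using ij by auto
    qed
    have "((i-1,4*m+7),(i-1+1,4*m+1)) \<in> bqg0_E" using b_down[of "i-1" m] i2 by simp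
    then have "((i-1,4*m+7),(i,4*m+1)) \<in> bqg0_E" using i2 by simp
    then have r2: "((i-1,4*m+7),(i,4*m+1)) \<in> (relW bqg0_E (Wb N))\<^sup>*"
      using w0 w1 by (intro rt_step)
    have r3: "((i,4*m+1),(i,j)) \<in> (relW bqg0_E (Wb N))\<^sup>*"
      using row_walk'[OF b_row w1 m(1)] .
    have eq: "(1+(i-2), 4*(m+1)+3) = (i-1, 4*m+7)" using i2 by simp
    have "i + j \<le> 2*(4*(m+1)+3+4*(i-2))+5" using m i2 by auto
    moreover have "((1, 4*(m+1)+3+4*(i-2)),(i,j)) \<in> (relW bqg0_E (Wb N))\<^sup>*"
      by (rule rtrancl_trans[OF rtrancl_trans[OF r1[unfolded eq] r2] r3])
    ultimately show ?thesis by blast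
  qed
qed

lemma lift_bqg:
  assumes "u \<in> bqg_V" "v \<in> bqg_V" "(u,v) \<in> (relW bqg0_E (Wb N))\<^sup>*"
  shows "(u,v) \<in> (relW bqg_E (bqg_V \<inter> Wb N))\<^sup>*"
proof -
  let ?R = "relW bqg_E (bqg_V \<inter> Wb N)"
  have uS: "u \<notin> bqg_S" using assms(1) by (simp add: bqg_V_def suppress_V_def)
  have WQ: "Wb N \<subseteq> qg_V" by (auto simp: Wb_def qg_V_def)
  have "(w \<notin> bqg_S \<longrightarrow> (u,w) \<in> ?R\<^sup>*) \<and>
        (w \<in> bqg_S \<longrightarrow> (\<exists>w'. w' \<notin> bqg_S \<and> w' \<in> Wb N \<and> (u,w') \<in> ?R\<^sup>* \<and>
            (\<exists>xs. set xs \<subseteq> bqg_S \<and> walk_arcs bqg0_E (w' # xs @ [w]))))"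
    if "(u,w) \<in> (relW bqg0_E (Wb N))\<^sup>*" for w
    using that
  proof (induction rule: rtrancl_induct)
    case base then show ?case using uS by simp
  next
    case (step w y)
    have wy: "(w,y) \<in> bqg0_E" "w \<in> Wb N" "y \<in> Wb N" using step(2) by auto
    show ?case
    proof (cases "w \<in> bqg_S")
      case False
      then have uw: "(u,w) \<in> ?R\<^sup>*" using step(3) by blast
      show ?thesis
      proof (cases "y \<in> bqg_S")
        case False
        have "(w,y) \<in> bqg_E"
          unfolding bqg_E_def suppress_E_def
          using wy WQ \<open>w \<notin> bqg_S\<close> False by (auto intro!: exI[of _ "[]"])
        then have "(w,y) \<in> ?R" using wy \<open>w \<notin> bqg_S\<close> False WQ
          by (auto simp: bqg_V_def suppress_V_def)
        then show ?thesis using uw False by (simp add: rtrancl_into_rtrancl)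
      next
        case True
        then show ?thesis using uw \<open>w \<notin> bqg_S\<close> wy by (intro conjI impI exI[of _ w] exI[of _ "[]"]) auto
      qed
    next
      case True
      then obtain w' xs where w': "w' \<notin> bqg_S" "w' \<in> Wb N" "(u,w') \<in> ?R\<^sup>*"
        "set xs \<subseteq> bqg_S" "walk_arcs bqg0_E (w' # xs @ [w])" using step(3) by blast
      have wk: "walk_arcs bqg0_E (w' # (xs @ [w]) @ [y])"
        using w'(5) wy(1) walk_arcs_append[of bqg0_E "w' # xs @ [w]" "[y]"] by simp
      show ?thesis
      proof (cases "y \<in> bqg_S")
        case False
        have "(w',y) \<in> bqg_E"
          unfolding bqg_E_def suppress_E_def
          using wy WQ w' False True wk by (auto intro!: exI[of _ "xs @ [w]"])
        then have "(w',y) \<in> ?R" using wy w' False WQ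
          by (auto simp: bqg_V_def suppress_V_def)
        then show ?thesis using w'(3) False by (simp add: rtrancl_into_rtrancl)
      next
        case y: True
        show ?thesis using w' True y wk by (intro conjI impI exI[of _ w'] exI[of _ "xs @ [w]"]) auto
      qed
    qed
  qed
  moreover have "v \<notin> bqg_S" using assms(2) by (simp add: bqg_V_def suppress_V_def)
  ultimately show ?thesis using assms(3) by blast
qed

lemma b_in_S:
  assumes "9 \<le> m" "m mod 4 = 1 \<or> m mod 4 = 2"
  shows "(1,m) \<in> bqg_S"
proof -
  have i: "{u. (u,(1,m)) \<in> bqg0_E} = {(1,m-1)}"
    using assms unfolding bqg0_E_def qg_rayE_def by (auto; presburger)
  have o: "{w. ((1,m),w) \<in> bqg0_E} = {(1,m+1)}"
    using assms unfolding bqg0_E_def qg_rayE_def by (auto; presburger)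
  have n: "\<forall>u. (u, (1, m)) \<in> bqg0_E \<or> ((1, m), u) \<in> bqg0_E \<longrightarrow> fst u = 1"
    using i o by auto
  show ?thesis
    unfolding bqg_S_def indeg_def outdeg_def using i o n assms by (auto simp: qg_V_def)
qed

definition bray :: "nat \<Rightarrow> nat \<times> nat" where
  "bray n = (1, if even n then 2*n+7 else 2*n+6)"

lemma bray_notS: "bray n \<notin> bqg_S"
proof (cases "even n")
  case True
  then obtain k where k: "n = 2*k" by blast
  have "((1, 4*k+7),(1+1, 4*k+1)) \<in> bqg0_E" by (rule b_down) simp
  then show ?thesis using k unfolding bray_def bqg_S_def by (auto simp: algebra_simps)
next
  case False
  then obtain k where k: "n = 2*k+1" using oddE by blast
  have "((1+1, 4*k+2),(1, 4*k+8)) \<in> bqg0_E" by (rule b_up) simp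
  then show ?thesis using k unfolding bray_def bqg_S_def by (auto simp: algebra_simps)
qed

lemma bray_V: "bray n \<in> bqg_V"
  using bray_notS[of n] by (auto simp: bqg_V_def suppress_V_def bray_def qg_V_def)

lemma bray_edge: "(bray n, bray (Suc n)) \<in> bqg_E"
proof (cases "even n")
  case True
  have "(bray n, bray (Suc n)) = ((1, 2*n+7), (1, Suc (2*n+7)))" using True by (simp add: bray_def)
  moreover have "((1, 2*n+7), (1, Suc (2*n+7))) \<in> bqg0_E" by (rule b_row) auto
  ultimately show ?thesis
    using bray_V[of n] bray_V[of "Suc n"]
    unfolding bqg_E_def suppress_E_def bqg_V_def suppress_V_def
    by (auto intro!: exI[of _ "[]"])
next
  case False
  have eq: "(bray n, bray (Suc n)) = ((1, 2*n+6), (1, 2*n+9))" using False by (simp add: bray_def)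
  have S1: "(1, 2*n+7) \<in> bqg_S" using False by (intro b_in_S) (auto, presburger+)
  have S2: "(1, 2*n+8) \<in> bqg_S" using False by (intro b_in_S) (auto, presburger+)
  have wk: "walk_arcs bqg0_E ((1, 2*n+6) # [(1, 2*n+7), (1, 2*n+8)] @ [(1, 2*n+9)])"
    using b_row[of 1 "2*n+6"] b_row[of 1 "2*n+7"] b_row[of 1 "2*n+8"] by (simp add: algebra_simps)
  show ?thesis
    using bray_V[of n] bray_V[of "Suc n"] eq S1 S2 wk
    unfolding bqg_E_def suppress_E_def bqg_V_def suppress_V_def
    by (auto intro!: exI[of _ "[(1, 2*n+7), (1, 2*n+8)]"])
qed

lemma bray_inj: "inj bray"
proof -
  have "strict_mono (\<lambda>n. snd (bray n))"
    unfolding strict_mono_Suc_iff by (auto simp: bray_def)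
  then have "inj (\<lambda>n. snd (bray n))" by (rule strict_mono_imp_inj_on)
  then show ?thesis by (auto simp: inj_def)
qed

lemma bqg_ray: "(True, bray) \<in> rays_antirays bqg_V bqg_E"
  unfolding rays_antirays_def ray_def using bray_inj bray_V bray_edge by auto

lemma bqg_one_end: "card (ends bqg_V bqg_E) = 1"
proof (rule grid_one_end[OF _ bqg_ray b_KA b_KB lift_bqg])
  show "bqg_V \<subseteq> qg_V" by (auto simp: bqg_V_def suppress_V_def)
qed auto


theorem lemma4p1:
  shows "card (ends bqg_V bqg_E) = 1 \<and>
         card (ends qg_V acq_E) = 1 \<and>
         card (ends qg_V dcq_E) = 1 \<and>
         (\<forall>(V :: 'a set) E. complete_ray_digraph V E \<longrightarrow> card (ends V E) = 1)"
  using bqg_one_end acq_one_end dcq_one_end crd_one_end by blast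

end
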